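(* Let $\Lambda$ be a finite nonempty set and $\mathcal{D}\subseteq\Lambda\times2^\Lambda$. Then: (1) $\mathcal{D}\subseteq\mathcal{D}^\circ\subseteq(\mathcal{D}^\circ)^{\sf ex}\subseteq\overline{\mathcal{D}}$ and ${\sf Base}(\mathcal{D})={\sf Base}(\mathcal{D}^\circ)={\sf Base}((\mathcal{D}^\circ)^{\sf ex})$; (2) $(\mathcal{D}^\circ)^\circ=\mathcal{D}^\circ$, $(\mathcal{D}^{\sf ex})^{\sf ex}=\mathcal{D}^{\sf ex}$ and $(\Lambda^{\sf triv})^{\sf ex}=\Lambda^{\sf triv}$; (3) $(\overline{\mathcal{D}})^{\sf ex}=\overline{\mathcal{D}}$; (4) if $(b,B),(c,C)\in\overline{\mathcal{D}}$ then $(b,B)\circ(c,C)\in\overline{\mathcal{D}}$; in particular $(\overline{\mathcal{D}})^\circ=\overline{\mathcal{D}}$; (5) $\overline{\overline{\mathcal{D}}}=\overline{\mathcal{D}}$; (6) if $\mathcal{D}\subseteq{\sf Div}(U)$ for a set of monomials $U$ indexed by $\Lambda$, then $\overline{\mathcal{D}}\subseteq{\sf Div}(U)$; in particular $\overline{{\sf Div}(U)}={\sf Div}(U)$.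
   Context: For monomials $U=\{u_i:i\in\Lambda\}$ (indexed so that $u_i=u_j$ implies $i=j$), a divisibility relation on $U$ is a pair $(b,B)$, $b\in\Lambda$, $\emptyset\ne B\subseteq\Lambda$, with $u_b\mid\mathrm{lcm}(u_i:i\in B)$; ${\sf Div}(U)$ is the set of these. $(b,B)^{\sf ex}=\{(b,C):B\subseteq C\subseteq\Lambda\}$; $(b,B)\circ(c,C)=(b,(B\smallsetminus\{c\})\cup C)$ (not associative). For $\mathcal{D}\subseteq\Lambda\times2^\Lambda$: $\mathcal{D}^\circ$ is the set of all compositions $(b_1,B_1)\circ\cdots\circ(b_s,B_s)$ with $s\ge1$ and $(b_i,B_i)\in\mathcal{D}$, including all possible bracketings; $\mathcal{D}^{\sf ex}=\bigcup_{(b,B)\in\mathcal{D}}(b,B)^{\sf ex}$; $\Lambda^{\sf triv}=\{(b,B)\in\Lambda\times2^\Lambda:b\in B\}$; $\overline{\mathcal{D}}=(\mathcal{D}^\circ)^{\sf ex}\cup\Lambda^{\sf triv}$; ${\sf Base}(\mathcal{D})=\{b:(b,B)\in\mathcal{D}\text{ for some }B\}$. *)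

theory Defs
  imports Main
begin

definition dcomp :: "'a \<times> 'a set \<Rightarrow> 'a \<times> 'a set \<Rightarrow> 'a \<times> 'a set" where
  "dcomp x y = (fst x, (snd x - {fst y}) \<union> snd y)"

inductive_set dcirc :: "('a \<times> 'a set) set \<Rightarrow> ('a \<times> 'a set) set" for D where
  base: "x \<in> D \<Longrightarrow> x \<in> dcirc D"
| comp: "x \<in> dcirc D \<Longrightarrow> y \<in> dcirc D \<Longrightarrow> dcomp x y \<in> dcirc D"

definition dex :: "'a set \<Rightarrow> ('a \<times> 'a set) set \<Rightarrow> ('a \<times> 'a set) set" where
  "dex L D = {(b, C). \<exists>B. (b, B) \<in> D \<and> B \<subseteq> C \<and> C \<subseteq> L}"

definition dtriv :: "'a set \<Rightarrow> ('a \<times> 'a set) set" where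
  "dtriv L = {(b, B). b \<in> L \<and> B \<subseteq> L \<and> b \<in> B}"

definition dclo :: "'a set \<Rightarrow> ('a \<times> 'a set) set \<Rightarrow> ('a \<times> 'a set) set" where
  "dclo L D = dex L (dcirc D) \<union> dtriv L"

definition dbase :: "('a \<times> 'a set) set \<Rightarrow> 'a set" where
  "dbase D = fst ` D"

text \<open>Monomials in the variables of a finite type 'v are exponent vectors 'v => nat.\<close>
definition mon_dvd :: "('v \<Rightarrow> nat) \<Rightarrow> ('v \<Rightarrow> nat) \<Rightarrow> bool" where
  "mon_dvd m n = (\<forall>v. m v \<le> n v)"

text \<open>lcm of the monomials u i, i in B (B finite nonempty): componentwise maximum of exponents.\<close>
definition mon_lcm :: "('a \<Rightarrow> 'v \<Rightarrow> nat) \<Rightarrow> 'a set \<Rightarrow> ('v \<Rightarrow> nat)" where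
  "mon_lcm u B = (\<lambda>v. Max ((\<lambda>i. u i v) ` B))"

definition Div :: "'a set \<Rightarrow> ('a \<Rightarrow> 'v \<Rightarrow> nat) \<Rightarrow> ('a \<times> 'a set) set" where
  "Div L u = {(b, B). b \<in> L \<and> B \<noteq> {} \<and> B \<subseteq> L \<and> mon_dvd (u b) (mon_lcm u B)}"

end

theory Submission
  imports Defs
begin

lemma dcirc_sub: assumes "X \<subseteq> L \<times> Pow L" shows "dcirc X \<subseteq> L \<times> Pow L"
proof
  fix x assume "x \<in> dcirc X" then show "x \<in> L \<times> Pow L"
    by induction (use assms in \<open>auto simp: dcomp_def\<close>)
qed

lemma dcirc_fst: "x \<in> dcirc X \<Longrightarrow> fst x \<in> fst ` X"
  by (induction rule: dcirc.induct) (auto simp: dcomp_def)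

lemma dcirc_idem: "dcirc (dcirc X) = dcirc X"
proof
  show "dcirc (dcirc X) \<subseteq> dcirc X"
  proof
    fix x assume "x \<in> dcirc (dcirc X)" then show "x \<in> dcirc X"
      by induction (auto intro: dcirc.comp)
  qed
qed (auto intro: dcirc.base)

lemma dex_ext: "X \<subseteq> UNIV \<times> Pow L \<Longrightarrow> X \<subseteq> dex L X"
  by (auto simp: dex_def)

lemma dex_sub: "X \<subseteq> L \<times> UNIV \<Longrightarrow> dex L X \<subseteq> L \<times> Pow L"
  by (auto simp: dex_def)

lemma dex_idem: "dex L (dex L X) = dex L X"
  unfolding dex_def by blast

lemma dex_triv: "dex L (dtriv L) = dtriv L"
  unfolding dex_def dtriv_def by blast

lemma dex_Un: "dex L (A \<union> B) = dex L A \<union> dex L B"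
  unfolding dex_def by blast

lemma dbase_dex: "X \<subseteq> UNIV \<times> Pow L \<Longrightarrow> dbase (dex L X) = dbase X"
  unfolding dex_def dbase_def by force

lemma dclo_sub: "X \<subseteq> L \<times> Pow L \<Longrightarrow> dclo L X \<subseteq> L \<times> Pow L"
  unfolding dclo_def dtriv_def using dex_sub[of "dcirc X" L] dcirc_sub[of X L] by blast

lemma dclo_comp:
  assumes "x \<in> dclo L X" "y \<in> dclo L X"
  shows "dcomp x y \<in> dclo L X"
proof -
  obtain b B' where x: "x = (b, B')" by (cases x)
  obtain c C' where y: "y = (c, C')" by (cases y)
  have B'L: "B' \<subseteq> L" and C'L: "C' \<subseteq> L" and bL: "b \<in> L \<or> (\<exists>B. (b,B) \<in> dcirc X \<and> B \<subseteq> B')"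
    using assms x y unfolding dclo_def dex_def dtriv_def by auto
  have res: "dcomp x y = (b, B' - {c} \<union> C')" using x y by (simp add: dcomp_def)
  have RL: "B' - {c} \<union> C' \<subseteq> L" using B'L C'L by auto
  show ?thesis
  proof (cases "x \<in> dex L (dcirc X)")
    case True
    then obtain B where B: "(b,B) \<in> dcirc X" "B \<subseteq> B'" using x unfolding dex_def by auto
    show ?thesis
    proof (cases "y \<in> dex L (dcirc X)")
      case True
      then obtain C where C: "(c,C) \<in> dcirc X" "C \<subseteq> C'" using y unfolding dex_def by auto
      show ?thesis
      proof (cases "c \<in> B")
        case True
        have "dcomp (b,B) (c,C) \<in> dcirc X" using B(1) C(1) by (rule dcirc.comp)
        then have "(b, B - {c} \<union> C) \<in> dcirc X" by (simp add: dcomp_def)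
        moreover have "B - {c} \<union> C \<subseteq> B' - {c} \<union> C'" using B(2) C(2) by blast
        ultimately have "(b, B' - {c} \<union> C') \<in> dex L (dcirc X)" using RL unfolding dex_def by blast
        then show ?thesis unfolding res dclo_def by blast
      next
        case False
        then have "B \<subseteq> B' - {c} \<union> C'" using B(2) by blast
        then have "(b, B' - {c} \<union> C') \<in> dex L (dcirc X)" using RL B(1) unfolding dex_def by blast
        then show ?thesis unfolding res dclo_def by blast
      qed
    next
      case False
      then have "c \<in> C'" using y assms(2) unfolding dclo_def dtriv_def by auto
      then have "B \<subseteq> B' - {c} \<union> C'" using B(2) by blast
      then have "(b, B' - {c} \<union> C') \<in> dex L (dcirc X)" using RL B(1) unfolding dex_def by blast
      then show ?thesis unfolding res dclo_def by blast
    qed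
  next
    case False
    then have bB: "b \<in> B'" "b \<in> L" using x assms(1) unfolding dclo_def dtriv_def by auto
    show ?thesis
    proof (cases "b = c")
      case False
      then have "(b, B' - {c} \<union> C') \<in> dtriv L" using RL bB unfolding dtriv_def by blast
      then show ?thesis unfolding res dclo_def by blast
    next
      case True
      show ?thesis
      proof (cases "y \<in> dex L (dcirc X)")
        case yT: True
        then obtain C where C: "(c,C) \<in> dcirc X" "C \<subseteq> C'" using y unfolding dex_def by auto
        then have "(b, B' - {c} \<union> C') \<in> dex L (dcirc X)" using RL True unfolding dex_def by blast
        then show ?thesis unfolding res dclo_def by blast
      next
        case False
        then have "c \<in> C'" using y assms(2) unfolding dclo_def dtriv_def by auto
        then have "(b, B' - {c} \<union> C') \<in> dtriv L" using RL bB True unfolding dtriv_def by blast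
        then show ?thesis unfolding res dclo_def by blast
      qed
    qed
  qed
qed

lemma dcirc_dclo: "X \<subseteq> L \<times> Pow L \<Longrightarrow> dcirc (dclo L X) = dclo L X"
proof
  show "dcirc (dclo L X) \<subseteq> dclo L X"
  proof
    fix x assume "x \<in> dcirc (dclo L X)" then show "x \<in> dclo L X"
      by induction (auto intro: dclo_comp)
  qed
qed (auto intro: dcirc.base)

lemma dex_dclo: "X \<subseteq> L \<times> Pow L \<Longrightarrow> dex L (dclo L X) = dclo L X"
  unfolding dclo_def dex_Un dex_idem dex_triv by simp

lemma dclo_idem: "X \<subseteq> L \<times> Pow L \<Longrightarrow> dclo L (dclo L X) = dclo L X"
proof -
  assume a: "X \<subseteq> L \<times> Pow L"
  have "dclo L (dclo L X) = dex L (dclo L X) \<union> dtriv L"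
    using dcirc_dclo[OF a] by (simp add: dclo_def)
  also have "\<dots> = dclo L X" using dex_dclo[OF a] by (auto simp: dclo_def)
  finally show ?thesis .
qed

lemma max_le_iff:
  assumes "finite B" "B \<noteq> {}"
  shows "(n \<le> Max ((\<lambda>i. u i v) ` B)) = (\<exists>i\<in>B. n \<le> u i v)"
  using assms by (simp add: Max_ge_iff)

lemma Div_alt:
  assumes "finite L"
  shows "(b,B) \<in> Div L u \<longleftrightarrow> b \<in> L \<and> B \<noteq> {} \<and> B \<subseteq> L \<and> (\<forall>v. \<exists>i\<in>B. u b v \<le> u i v)"
proof -
  have eq: "mon_dvd (u b) (mon_lcm u B) = (\<forall>v. \<exists>i\<in>B. u b v \<le> u i v)" if "B \<subseteq> L" "B \<noteq> {}"
  proof -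
    have fB: "finite B" using finite_subset[OF that(1) assms] .
    show ?thesis
      unfolding mon_dvd_def mon_lcm_def by (simp add: max_le_iff[OF fB that(2)])
  qed
  show ?thesis
  proof
    assume "(b,B) \<in> Div L u"
    then have h: "b \<in> L" "B \<noteq> {}" "B \<subseteq> L" "mon_dvd (u b) (mon_lcm u B)"
      unfolding Div_def by auto
    then show "b \<in> L \<and> B \<noteq> {} \<and> B \<subseteq> L \<and> (\<forall>v. \<exists>i\<in>B. u b v \<le> u i v)"
      using eq[OF h(3) h(2)] by simp
  next
    assume h: "b \<in> L \<and> B \<noteq> {} \<and> B \<subseteq> L \<and> (\<forall>v. \<exists>i\<in>B. u b v \<le> u i v)"
    then have "mon_dvd (u b) (mon_lcm u B)" using eq by simp
    then show "(b,B) \<in> Div L u" using h unfolding Div_def by simp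
  qed
qed

lemma Div_clo:
  assumes "finite L" "X \<subseteq> Div L u"
  shows "dclo L X \<subseteq> Div L u"
proof -
  have circ: "dcirc X \<subseteq> Div L u"
  proof
    fix x assume "x \<in> dcirc X" then show "x \<in> Div L u"
    proof induction
      case (base x) then show ?case using assms by auto
    next
      case (comp x y)
      obtain b B where x: "x = (b,B)" by (cases x)
      obtain c C where y: "y = (c,C)" by (cases y)
      have X: "b \<in> L" "B \<noteq> {}" "B \<subseteq> L" "\<forall>v. \<exists>i\<in>B. u b v \<le> u i v"
        using comp.IH(1) unfolding x Div_alt[OF assms(1)] by auto
      have Y: "c \<in> L" "C \<noteq> {}" "C \<subseteq> L" "\<forall>v. \<exists>i\<in>C. u c v \<le> u i v"
        using comp.IH(2) unfolding y Div_alt[OF assms(1)] by auto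
      have "\<forall>v. \<exists>i\<in>B - {c} \<union> C. u b v \<le> u i v"
      proof
        fix v
        obtain i where i: "i \<in> B" "u b v \<le> u i v" using X(4) by blast
        show "\<exists>i\<in>B - {c} \<union> C. u b v \<le> u i v"
        proof (cases "i = c")
          case True
          obtain j where j: "j \<in> C" "u c v \<le> u j v" using Y(4) by blast
          have "u b v \<le> u j v" using i(2) True j(2) by simp
          then show ?thesis using j(1) by blast
        next
          case False then show ?thesis using i by blast
        qed
      qed
      then show ?case unfolding x y dcomp_def Div_alt[OF assms(1)] fst_conv snd_conv
        using X Y by blast
    qed
  qed
  have "dex L (dcirc X) \<subseteq> Div L u"
  proof
    fix x assume "x \<in> dex L (dcirc X)"
    then obtain b B C where x: "x = (b,C)" "(b,B) \<in> dcirc X" "B \<subseteq> C" "C \<subseteq> L"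
      unfolding dex_def by auto
    have "(b,B) \<in> Div L u" using circ x(2) by blast
    then have "b \<in> L" "B \<noteq> {}" "\<forall>v. \<exists>i\<in>B. u b v \<le> u i v"
      unfolding Div_alt[OF assms(1)] by auto
    then show "x \<in> Div L u" unfolding x(1) Div_alt[OF assms(1)] using x(3,4) by blast
  qed
  moreover have "dtriv L \<subseteq> Div L u"
  proof
    fix x assume "x \<in> dtriv L"
    then obtain b B where x: "x = (b,B)" "b \<in> L" "B \<subseteq> L" "b \<in> B" unfolding dtriv_def by auto
    then show "x \<in> Div L u" unfolding x(1) Div_alt[OF assms(1)] by blast
  qed
  ultimately show ?thesis unfolding dclo_def by blast
qed

theorem proposition2p5:
  fixes L :: "'a set" and D :: "('a \<times> 'a set) set"
  assumes "finite L" and "L \<noteq> {}" and "D \<subseteq> L \<times> Pow L"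
  shows
    "(D \<subseteq> dcirc D \<and> dcirc D \<subseteq> dex L (dcirc D) \<and> dex L (dcirc D) \<subseteq> dclo L D
      \<and> dbase D = dbase (dcirc D) \<and> dbase (dcirc D) = dbase (dex L (dcirc D)))
   \<and> (dcirc (dcirc D) = dcirc D \<and> dex L (dex L D) = dex L D \<and> dex L (dtriv L) = dtriv L)
   \<and> dex L (dclo L D) = dclo L D
   \<and> ((\<forall>x\<in>dclo L D. \<forall>y\<in>dclo L D. dcomp x y \<in> dclo L D) \<and> dcirc (dclo L D) = dclo L D)
   \<and> dclo L (dclo L D) = dclo L D
   \<and> (\<forall>u :: 'a \<Rightarrow> ('v::finite \<Rightarrow> nat). inj_on u L \<longrightarrow>
        (D \<subseteq> Div L u \<longrightarrow> dclo L D \<subseteq> Div L u) \<and> dclo L (Div L u) = Div L u)"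
proof -
  note D = assms(3)
  have cs: "dcirc D \<subseteq> L \<times> Pow L" using dcirc_sub[OF D] .
  have b1: "dbase D = dbase (dcirc D)"
    unfolding dbase_def using dcirc_fst[of _ D] by (auto intro: dcirc.base)
  have b2: "dbase (dcirc D) = dbase (dex L (dcirc D))"
    using dbase_dex[of "dcirc D" L] cs by auto
  have divsub: "Div L u \<subseteq> L \<times> Pow L" for u :: "'a \<Rightarrow> 'v \<Rightarrow> nat"
    unfolding Div_def by auto
  have divclo: "dclo L (Div L u) = Div L u" for u :: "'a \<Rightarrow> 'v \<Rightarrow> nat"
  proof
    show "dclo L (Div L u) \<subseteq> Div L u" using Div_clo[OF assms(1)] by blast
    show "Div L u \<subseteq> dclo L (Div L u)"
      using dex_ext[of "dcirc (Div L u)" L] dcirc_sub[OF divsub[of u]]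
      unfolding dclo_def by (auto intro: dcirc.base)
  qed
  have p1: "D \<subseteq> dcirc D \<and> dcirc D \<subseteq> dex L (dcirc D) \<and> dex L (dcirc D) \<subseteq> dclo L D
      \<and> dbase D = dbase (dcirc D) \<and> dbase (dcirc D) = dbase (dex L (dcirc D))"
    using cs b1 b2 dex_ext[of "dcirc D" L] by (auto intro: dcirc.base simp: dclo_def)
  have p6: "\<forall>u :: 'a \<Rightarrow> ('v::finite \<Rightarrow> nat). inj_on u L \<longrightarrow>
        (D \<subseteq> Div L u \<longrightarrow> dclo L D \<subseteq> Div L u) \<and> dclo L (Div L u) = Div L u"
    using Div_clo[OF assms(1)] divclo by blast
  show ?thesis
    using p1 p6 dcirc_idem[of D] dex_idem[of L D] dex_triv[of L]
      dex_dclo[OF D] dclo_comp[of _ L D] dcirc_dclo[OF D] dclo_idem[OF D]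
    by blast
qed

end
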